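(* Every D-finite power series $f\in\mathbb{C}[[x]]$ is eventually stable: there exists $m\in\mathbb{N}$ such that $\mathrm{int}^m(f)$ is stable.
   Context: Let $\delta=d/dx$ on $\mathbb{C}[[x]]$ and $\mathbb{C}(x)$, and let $\mathbb{C}(x)\langle D\rangle$ be the ring of linear differential operators $\sum_i \ell_i D^i$ ($\ell_i\in\mathbb{C}(x)$) acting by $D(h)=\delta(h)$, with $D\cdot r=r\cdot D+\delta(r)$. A power series $h\in\mathbb{C}[[x]]$ is D-finite if some nonzero $L\in\mathbb{C}(x)\langle D\rangle$ (an annihilator) satisfies $L(h)=0$; its minimal annihilator is a nonzero annihilator of least order. For $h=\sum_{n\ge0}a_nx^n$, the formal integral is $\mathrm{int}(h)=\sum_{n\ge1}\frac{a_{n-1}}{n}x^n$, and $\mathrm{int}^m$ is its $m$-fold iterate. A D-finite power series $h$ is stable if there is a sequence $(g_i)_{i\in\mathbb{N}}$ in $\mathbb{C}[[x]]$ with $g_0=h$, $g_i=\delta(g_{i+1})$ for all $i$, and all $g_i$ have (minimal) annihilators of the same order. *)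

theory Defs
  imports "HOL-Computational_Algebra.Computational_Algebra"
begin

text \<open>A rational function p/q in C(x) (q nonzero), viewed inside the field of
formal Laurent series C((x)), which contains C[[x]].\<close>
definition rat_fls :: "complex poly \<Rightarrow> complex poly \<Rightarrow> complex fls" where
  "rat_fls p q = fps_to_fls (fps_of_poly p) / fps_to_fls (fps_of_poly q)"

definition has_annihilator_of_order :: "complex fps \<Rightarrow> nat \<Rightarrow> bool" where
  "has_annihilator_of_order h r \<longleftrightarrow>
     (\<exists>p q :: nat \<Rightarrow> complex poly.
        (\<forall>i\<le>r. q i \<noteq> 0) \<and> p r \<noteq> 0 \<and>
        (\<Sum>i\<le>r. rat_fls (p i) (q i) * fps_to_fls ((fps_deriv ^^ i) h)) = 0)"

definition dfinite :: "complex fps \<Rightarrow> bool" where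
  "dfinite h \<longleftrightarrow> (\<exists>r. has_annihilator_of_order h r)"

definition dfinite_order :: "complex fps \<Rightarrow> nat" where
  "dfinite_order h = (LEAST r. has_annihilator_of_order h r)"

definition fps_int :: "complex fps \<Rightarrow> complex fps" where
  "fps_int h = Abs_fps (\<lambda>n. if n = 0 then 0 else fps_nth h (n - 1) / of_nat n)"

definition stable :: "complex fps \<Rightarrow> bool" where
  "stable h \<longleftrightarrow> dfinite h \<and>
     (\<exists>g :: nat \<Rightarrow> complex fps. g 0 = h \<and> (\<forall>i. g i = fps_deriv (g (Suc i))) \<and>
        (\<forall>i. dfinite (g i) \<and> dfinite_order (g i) = dfinite_order h))"

end

theory Submission
  imports Defs
begin


lemma fps_int_nth: "fps_int h $ n = (if n = 0 then 0 else h $ (n - 1) / of_nat n)"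
  by (simp add: fps_int_def)

lemma fps_deriv_fps_int [simp]: "fps_deriv (fps_int h) = h"
  by (rule fps_ext) (simp add: fps_int_def del: of_nat_Suc)

lemma fps_int_0th [simp]: "fps_int h $ 0 = 0"
  by (simp add: fps_int_def)

lemma fps_int_unique:
  assumes "a $ 0 = 0" "fps_deriv a = h" shows "a = fps_int h"
proof -
  have "fps_deriv a = fps_deriv (fps_int h)" using assms by simp
  then have "a = fps_const (a $ 0 - fps_int h $ 0) + fps_int h" by (simp only: fps_deriv_eq_iff)
  then show ?thesis using assms by simp
qed

lemma fps_int_add: "fps_int (a + b) = fps_int a + fps_int b"
  by (rule fps_int_unique[symmetric]) simp_all

lemma fps_int_diff: "fps_int (a - b) = fps_int a - fps_int b"
  by (rule fps_int_unique[symmetric]) simp_all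

lemma fps_int_zero [simp]: "fps_int 0 = 0"
  by (rule fps_int_unique[symmetric]) simp_all

lemma fps_int_const_mult: "fps_int (fps_const c * a) = fps_const c * fps_int a"
  by (rule fps_int_unique[symmetric]) simp_all

lemma fps_int_sum: "fps_int (sum g A) = (\<Sum>x\<in>A. fps_int (g x))"
  by (rule fps_int_unique[symmetric]) (simp_all add: fps_sum_nth fps_deriv_sum)

lemma fps_int_parts:
  "fps_int (fps_deriv u * v) = u * v - fps_const (u $ 0 * v $ 0) - fps_int (u * fps_deriv v)"
  by (rule fps_int_unique[symmetric]) (simp_all add: algebra_simps)

lemma fps_int_monom: "fps_int (fps_of_poly (monom a k)) = fps_of_poly (monom (a / of_nat (Suc k)) (Suc k))"
  by (rule fps_ext) (auto simp: fps_int_def fps_of_poly_monom)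

lemma fps_int_poly: "\<exists>C. fps_of_poly C = fps_int (fps_of_poly c)"
proof -
  have "fps_int (fps_of_poly c) = fps_int (fps_of_poly (\<Sum>i\<le>degree c. monom (coeff c i) i))"
    by (simp add: poly_as_sum_of_monoms)
  also have "\<dots> = fps_of_poly (\<Sum>i\<le>degree c. monom (coeff c i / of_nat (Suc i)) (Suc i))"
    by (simp add: fps_of_poly_sum fps_int_sum fps_int_monom)
  finally show ?thesis by metis
qed

definition pscale :: "complex poly \<Rightarrow> complex fps \<Rightarrow> complex fps" where
  "pscale p v = fps_of_poly p * v"

interpretation pm: module pscale
  by unfold_locales (simp_all add: pscale_def fps_of_poly_add fps_of_poly_mult algebra_simps)



lemma fps_to_fls_sum: "fps_to_fls (sum g A) = (\<Sum>x\<in>A. fps_to_fls (g x))"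
  by (induction A rule: infinite_finite_induct) auto

definition poly_ann :: "complex fps \<Rightarrow> nat \<Rightarrow> (nat \<Rightarrow> complex poly) \<Rightarrow> bool" where
  "poly_ann h r c \<longleftrightarrow> c r \<noteq> 0 \<and> (\<Sum>i\<le>r. fps_of_poly (c i) * (fps_deriv ^^ i) h) = 0"

abbreviation F :: "complex poly \<Rightarrow> complex fls" where
  "F p \<equiv> fps_to_fls (fps_of_poly p)"

lemma F_nz: "p \<noteq> 0 \<Longrightarrow> F p \<noteq> 0"
  by (simp add: fps_of_poly_eq_iff[of p 0, simplified])

lemma F_mult: "F (p * q) = F p * F q"
  by (simp add: fps_of_poly_mult fls_times_fps_to_fls)

lemma F_prod: "F (prod g A) = (\<Prod>x\<in>A. F (g x))"
  by (induction A rule: infinite_finite_induct) (auto simp: F_mult)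

lemma poly_ann_imp: assumes "poly_ann h r c" shows "has_annihilator_of_order h r"
proof -
  have a: "(\<Sum>i\<le>r. fps_of_poly (c i) * (fps_deriv ^^ i) h) = 0" and cr: "c r \<noteq> 0"
    using assms by (auto simp: poly_ann_def)
  have "(\<Sum>i\<le>r. rat_fls (c i) 1 * fps_to_fls ((fps_deriv ^^ i) h)) =
    fps_to_fls (\<Sum>i\<le>r. fps_of_poly (c i) * (fps_deriv ^^ i) h)"
    by (simp add: rat_fls_def fps_to_fls_sum fls_times_fps_to_fls)
  then have "(\<Sum>i\<le>r. rat_fls (c i) 1 * fps_to_fls ((fps_deriv ^^ i) h)) = 0"
    using a by simp
  then show ?thesis unfolding has_annihilator_of_order_def using cr
    by (intro exI[of _ c] exI[of _ "\<lambda>_. 1"]) auto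
qed

lemma ann_imp_poly_ann:
  assumes "has_annihilator_of_order h r" shows "\<exists>c. poly_ann h r c"
proof -
  obtain p q where q: "\<forall>i\<le>r. q i \<noteq> 0" and pr: "p r \<noteq> 0"
    and s: "(\<Sum>i\<le>r. rat_fls (p i) (q i) * fps_to_fls ((fps_deriv ^^ i) h)) = 0"
    using assms unfolding has_annihilator_of_order_def by blast
  define c where "c i = p i * (\<Prod>k\<in>{..r}-{i}. q k)" for i
  have key: "F (c i) = (\<Prod>k\<le>r. F (q k)) * rat_fls (p i) (q i)" if "i \<le> r" for i
  proof -
    have "(\<Prod>k\<le>r. F (q k)) = F (q i) * (\<Prod>k\<in>{..r}-{i}. F (q k))"
      using that by (subst prod.remove[of _ i]) auto
    moreover have "F (q i) \<noteq> 0" using q that F_nz by blast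
    ultimately show ?thesis
      by (simp add: c_def F_mult F_prod rat_fls_def field_simps)
  qed
  have "fps_to_fls (\<Sum>i\<le>r. fps_of_poly (c i) * (fps_deriv ^^ i) h)
      = (\<Sum>i\<le>r. F (c i) * fps_to_fls ((fps_deriv ^^ i) h))"
    by (simp add: fps_to_fls_sum fls_times_fps_to_fls)
  also have "\<dots> = (\<Sum>i\<le>r. (\<Prod>k\<le>r. F (q k)) * (rat_fls (p i) (q i) * fps_to_fls ((fps_deriv ^^ i) h)))"
    by (rule sum.cong) (simp_all add: key mult.assoc)
  also have "\<dots> = 0" using s by (simp add: sum_distrib_left[symmetric])
  finally have "(\<Sum>i\<le>r. fps_of_poly (c i) * (fps_deriv ^^ i) h) = 0" by simp
  moreover have "c r \<noteq> 0" using pr q by (simp add: c_def)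
  ultimately show ?thesis unfolding poly_ann_def by blast
qed

lemma ann_iff: "has_annihilator_of_order h r \<longleftrightarrow> (\<exists>c. poly_ann h r c)"
  using ann_imp_poly_ann poly_ann_imp by blast

lemma dfinite_iff: "dfinite h \<longleftrightarrow> (\<exists>r c. poly_ann h r c)"
  by (simp add: dfinite_def ann_iff)

lemma order_le: "poly_ann h r c \<Longrightarrow> dfinite_order h \<le> r"
  unfolding dfinite_order_def by (rule Least_le) (rule poly_ann_imp)

lemma order_ann: "dfinite h \<Longrightarrow> \<exists>c. poly_ann h (dfinite_order h) c"
  unfolding dfinite_order_def dfinite_def using ann_imp_poly_ann by (metis LeastI)



lemma int_poly_ann:
  assumes "poly_ann h r c"
  shows "poly_ann (fps_int h) (Suc r) (\<lambda>i. if i = 0 then 0 else c (i - 1))"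
proof -
  have "(\<Sum>i\<le>Suc r. fps_of_poly (if i = 0 then 0 else c (i - 1)) * (fps_deriv ^^ i) (fps_int h))
      = (\<Sum>i\<le>r. fps_of_poly (c i) * (fps_deriv ^^ Suc i) (fps_int h))"
    by (subst sum.atMost_Suc_shift) simp
  also have "\<dots> = (\<Sum>i\<le>r. fps_of_poly (c i) * (fps_deriv ^^ i) h)"
    by (simp only: funpow_Suc_right o_def fps_deriv_fps_int)
  finally show ?thesis using assms by (simp add: poly_ann_def)
qed

lemma dfinite_int: "dfinite h \<Longrightarrow> dfinite (fps_int h)"
  using int_poly_ann dfinite_iff by blast

lemma deriv_poly_ann:
  assumes "poly_ann g s c"
  shows "\<exists>j\<le>s. \<exists>c'. poly_ann (fps_deriv g) j c'"
proof -
  define G where "G i = (fps_deriv ^^ i) g" for i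
  define P where "P = (fps_of_poly :: complex poly \<Rightarrow> complex fps)"
  have GS: "G (Suc i) = (fps_deriv ^^ i) (fps_deriv g)" for i
    by (simp add: G_def funpow_Suc_right del: funpow.simps)
  have GS': "G (Suc i) = fps_deriv (G i)" for i by (simp add: G_def)
  have E: "(\<Sum>i\<le>s. P (c i) * G i) = 0" and cs: "c s \<noteq> 0"
    using assms by (auto simp: poly_ann_def G_def P_def)
  show ?thesis
  proof (cases "c 0 = 0")
    case True
    then have "s \<noteq> 0" using cs by metis
    then obtain t where t: "s = Suc t" by (cases s) auto
    have "(\<Sum>i\<le>t. P (c (Suc i)) * G (Suc i)) = (\<Sum>i\<le>s. P (c i) * G i)"
      by (simp only: t sum.atMost_Suc_shift) (simp add: True P_def)
    then have "poly_ann (fps_deriv g) t (\<lambda>i. c (Suc i))"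
      using E cs by (simp add: poly_ann_def t GS P_def)
    then show ?thesis using t le_SucI by blast
  next
    case False
    define c' where "c' i = c 0 * c i + (if i < s then c 0 * pderiv (c (Suc i)) - pderiv (c 0) * c (Suc i) else 0)" for i
    have E': "fps_deriv (\<Sum>i\<le>s. P (c i) * G i) = (\<Sum>i\<le>s. P (pderiv (c i)) * G i + P (c i) * G (Suc i))"
      by (simp add: fps_deriv_sum GS' P_def fps_of_poly_pderiv algebra_simps)
    have A: "(\<Sum>i\<le>s. (P (c 0) * P (pderiv (c i)) - P (pderiv (c 0)) * P (c i)) * G i)
       = (\<Sum>i\<le>s. (if i < s then P (c 0) * P (pderiv (c (Suc i))) - P (pderiv (c 0)) * P (c (Suc i)) else 0) * G (Suc i))"
    proof -
      have "(\<Sum>i\<le>s. (P (c 0) * P (pderiv (c i)) - P (pderiv (c 0)) * P (c i)) * G i)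
        = (\<Sum>i<s. (P (c 0) * P (pderiv (c (Suc i))) - P (pderiv (c 0)) * P (c (Suc i))) * G (Suc i))"
        by (simp only: lessThan_Suc_atMost[symmetric] sum.lessThan_Suc_shift) simp
      also have "\<dots> = (\<Sum>i\<le>s. (if i < s then P (c 0) * P (pderiv (c (Suc i))) - P (pderiv (c 0)) * P (c (Suc i)) else 0) * G (Suc i))"
        by (simp add: lessThan_Suc_atMost[symmetric] sum.lessThan_Suc if_distrib cong: if_cong)
      finally show ?thesis .
    qed
    have "(\<Sum>i\<le>s. P (c' i) * G (Suc i))
        = (\<Sum>i\<le>s. (P (c 0) * P (pderiv (c i)) - P (pderiv (c 0)) * P (c i)) * G i)
          + (\<Sum>i\<le>s. P (c 0) * P (c i) * G (Suc i))"
      unfolding A sum.distrib[symmetric]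
      by (rule sum.cong) (simp_all add: c'_def P_def fps_of_poly_add fps_of_poly_mult fps_of_poly_diff algebra_simps)
    also have "\<dots> = P (c 0) * fps_deriv (\<Sum>i\<le>s. P (c i) * G i) - P (pderiv (c 0)) * (\<Sum>i\<le>s. P (c i) * G i)"
      unfolding E' by (simp add: sum_distrib_left sum.distrib sum_subtractf algebra_simps)
    also have "\<dots> = 0" using E by simp
    finally have "poly_ann (fps_deriv g) s c'"
      using cs False by (simp add: poly_ann_def c'_def GS P_def)
    then show ?thesis by auto
  qed
qed

lemma order_deriv_le:
  assumes "dfinite g" shows "dfinite (fps_deriv g) \<and> dfinite_order (fps_deriv g) \<le> dfinite_order g"
proof -
  obtain c where "poly_ann g (dfinite_order g) c" using order_ann assms by blast
  then obtain j c' where "j \<le> dfinite_order g" "poly_ann (fps_deriv g) j c'"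
    using deriv_poly_ann by blast
  then show ?thesis using order_le dfinite_iff by fastforce
qed



lemma fps_of_poly_uminus': "fps_of_poly (- p) = - fps_of_poly p"
  using fps_of_poly_diff[of 0 p] by simp

lemma pscale_eq: "pscale (c * a) v = pscale c (pscale a v)"
  by (simp add: pscale_def fps_of_poly_mult)

lemma dep:
  assumes "finite B"
  shows "finite I \<Longrightarrow> card B < card I \<Longrightarrow> (\<forall>i\<in>I. v i \<in> pm.span B)
    \<Longrightarrow> \<exists>c. (\<exists>i\<in>I. c i \<noteq> 0) \<and> (\<Sum>i\<in>I. pscale (c i) (v i)) = 0"
  using assms
proof (induction B arbitrary: I v rule: finite_induct)
  case empty
  then obtain i0 where i0: "i0 \<in> I" by fastforce
  have "(\<Sum>i\<in>I. pscale (if i = i0 then 1 else 0) (v i)) = (\<Sum>i\<in>I. if i = i0 then v i0 else 0)"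
    by (rule sum.cong) (auto simp: pscale_def)
  also have "\<dots> = 0" using empty i0 by simp
  finally show ?case using i0 by (intro exI[of _ "\<lambda>i. if i = i0 then 1 else 0"]) auto
next
  case (insert b B)
  have "\<forall>i\<in>I. \<exists>a. v i - pscale a b \<in> pm.span B"
    using insert.prems(3) pm.span_insert by blast
  then obtain a where a: "\<And>i. i \<in> I \<Longrightarrow> v i - pscale (a i) b \<in> pm.span B" by metis
  show ?case
  proof (cases "\<forall>i\<in>I. a i = 0")
    case True
    then have "\<forall>i\<in>I. v i \<in> pm.span B" using a by (simp add: pscale_def)
    moreover have "card B < card I" using insert by simp
    ultimately show ?thesis using insert.IH insert.prems by blast
  next
    case False
    then obtain i0 where i0: "i0 \<in> I" "a i0 \<noteq> 0" by blast
    define I' where "I' = I - {i0}"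
    define u where "u j = pscale (a i0) (v j) - pscale (a j) (v i0)" for j
    have u: "u j \<in> pm.span B" if "j \<in> I" for j
    proof -
      have "u j = pscale (a i0) (v j - pscale (a j) b) - pscale (a j) (v i0 - pscale (a i0) b)"
        by (simp add: u_def pscale_def algebra_simps)
      then show ?thesis using a that i0 by (simp add: pm.span_diff pm.span_scale)
    qed
    have cI': "card B < card I'" using insert i0 by (simp add: I'_def)
    obtain c' where c': "\<exists>i\<in>I'. c' i \<noteq> 0" "(\<Sum>i\<in>I'. pscale (c' i) (u i)) = 0"
      using insert.IH[of I' u] cI' u insert.prems by (auto simp: I'_def)
    define c where "c j = (if j = i0 then - (\<Sum>k\<in>I'. c' k * a k) else c' j * a i0)" for j
    have "(\<Sum>i\<in>I. pscale (c i) (v i)) = pscale (c i0) (v i0) + (\<Sum>i\<in>I'. pscale (c i) (v i))"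
      using insert.prems i0 by (simp add: I'_def sum.remove)
    also have "\<dots> = (\<Sum>i\<in>I'. pscale (c' i) (u i))"
      by (simp add: c_def I'_def u_def pscale_def sum_distrib_right sum_subtractf
          fps_of_poly_mult fps_of_poly_sum fps_of_poly_uminus' sum_distrib_left algebra_simps)
    finally have "(\<Sum>i\<in>I. pscale (c i) (v i)) = 0" using c' by simp
    moreover have "\<exists>i\<in>I. c i \<noteq> 0"
      using c' i0 by (auto simp: c_def I'_def)
    ultimately show ?thesis by blast
  qed
qed



lemma coeff_pderiv_pow:
  "coeff ((pderiv ^^ i) p) k = pochhammer (of_nat (Suc k)) i * coeff (p :: complex poly) (k + i)"
proof (induction i arbitrary: k)
  case (Suc i)
  have "coeff ((pderiv ^^ Suc i) p) k = of_nat (Suc k) * coeff ((pderiv ^^ i) p) (Suc k)"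
    by (simp add: coeff_pderiv)
  also have "\<dots> = of_nat (Suc k) * (pochhammer (of_nat (Suc (Suc k))) i * coeff p (Suc k + i))"
    using Suc by simp
  also have "\<dots> = pochhammer (of_nat (Suc k)) (Suc i) * coeff p (k + Suc i)"
    by (simp add: pochhammer_rec algebra_simps)
  finally show ?case .
qed simp

definition Qp :: "nat \<Rightarrow> complex poly" where
  "Qp i = (\<Prod>t<i. [:of_nat (Suc t), 1:])"

lemma Qp_degree: "degree (Qp i) = i"
  unfolding Qp_def by (subst degree_prod_eq_sum_degree) auto

lemma Qp_lead: "coeff (Qp i) i = 1"
proof -
  have "lead_coeff (Qp i) = 1" unfolding Qp_def lead_coeff_prod by simp
  then show ?thesis using Qp_degree by simp
qed

lemma Qp_poly: "poly (Qp i) (of_nat n) = pochhammer (of_nat (Suc n)) i"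
  by (simp add: Qp_def poly_prod pochhammer_prod atLeast0LessThan algebra_simps)

lemma L3_gen:
  fixes l :: "nat \<Rightarrow> complex poly"
  assumes lr: "l r \<noteq> 0"
  defines "Ls \<equiv> \<lambda>q. (\<Sum>i\<le>r. smult ((-1) ^ i) ((pderiv ^^ i) (q * l i)))"
  shows "\<exists>N\<ge>1. \<forall>n\<ge>N. \<exists>q. coeff (Ls q) n \<noteq> 0 \<and> (\<forall>m>n. coeff (Ls q) m = 0)"
proof -
  define A where "A = {i\<in>{..r}. l i \<noteq> 0}"
  have A: "finite A" "r \<in> A" using lr by (auto simp: A_def)
  define E where "E = Max ((\<lambda>i. degree (l i) + r - i) ` A)"
  have E1: "degree (l i) + r - i \<le> E" if "i \<in> A" for i
    using that A by (auto simp: E_def)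
  have iA: "i \<le> r" if "i \<in> A" for i using that by (simp add: A_def)
  have "E \<in> (\<lambda>i. degree (l i) + r - i) ` A" unfolding E_def using A by (intro Max_in) auto
  then obtain i0 where i0: "i0 \<in> A" "degree (l i0) + r - i0 = E" by auto
  define e where "e i = coeff (l i) (E + i - r)" for i
  define T where "T = {i\<in>{..r}. e i \<noteq> 0}"
  have "e i0 \<noteq> 0"
  proof -
    have "E + i0 - r = degree (l i0)" using i0 iA[of i0] by simp
    then show ?thesis using i0 by (simp add: e_def A_def)
  qed
  then have T: "finite T" "T \<noteq> {}" using iA[OF i0(1)] by (auto simp: T_def)
  define ist where "ist = Max T"
  have istT: "ist \<in> T" using T by (simp add: ist_def)
  have e0: "e i = 0" if "ist < i" "i \<le> r" for i
  proof (rule ccontr)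
    assume "e i \<noteq> 0"
    then have "i \<in> T" using that by (simp add: T_def)
    then have "i \<le> ist" using Max_ge[OF T(1)] ist_def by blast
    with that show False by simp
  qed
  define Phi where "Phi = (\<Sum>i\<le>r. smult ((-1) ^ i * e i) (Qp i))"
  have "coeff Phi ist = (\<Sum>i\<le>r. (-1) ^ i * e i * coeff (Qp i) ist)"
    by (simp add: Phi_def coeff_sum)
  also have "\<dots> = (\<Sum>i\<in>{ist}. (-1) ^ i * e i * coeff (Qp i) ist)"
  proof (rule sum.mono_neutral_right)
    show "\<forall>i\<in>{..r} - {ist}. (-1) ^ i * e i * coeff (Qp i) ist = 0"
    proof
      fix i assume i: "i \<in> {..r} - {ist}"
      show "(-1) ^ i * e i * coeff (Qp i) ist = 0"
      proof (cases "i < ist")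
        case True
        then show ?thesis using Qp_degree[of i] by (simp add: coeff_eq_0)
      next
        case False
        then show ?thesis using i e0 by auto
      qed
    qed
  qed (use istT in \<open>auto simp: T_def\<close>)
  also have "\<dots> \<noteq> 0" using istT by (simp add: Qp_lead T_def)
  finally have Phi0: "Phi \<noteq> 0" by auto
  have "finite {x. poly Phi x = 0}" using Phi0 by (rule poly_roots_finite)
  then have "finite (of_nat -` {x. poly Phi x = 0} :: nat set)"
    by (rule finite_vimageI) (simp add: inj_on_def)
  then obtain N0 where N0: "\<And>n. poly Phi (of_nat n) = 0 \<Longrightarrow> n < N0"
    unfolding finite_nat_set_iff_bounded by auto
  define N where "N = max (max N0 E) 1"
  have "\<exists>q. coeff (Ls q) n \<noteq> 0 \<and> (\<forall>m>n. coeff (Ls q) m = 0)" if n: "n \<ge> N" for n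
  proof -
    define s where "s = n + r - E"
    have cf: "coeff (Ls (monom 1 s)) k = (\<Sum>i\<le>r. (-1) ^ i * pochhammer (of_nat (Suc k)) i *
         (if k + i < s then 0 else coeff (l i) (k + i - s)))" for k
      by (simp add: Ls_def coeff_sum coeff_pderiv_pow coeff_monom_mult mult.assoc, rule sum.cong, simp_all)
    have "coeff (Ls (monom 1 s)) n = (\<Sum>i\<le>r. (-1) ^ i * pochhammer (of_nat (Suc n)) i * e i)"
      unfolding cf
    proof (rule sum.cong)
      fix i assume i: "i \<in> {..r}"
      show "(-1) ^ i * pochhammer (of_nat (Suc n)) i * (if n + i < s then 0 else coeff (l i) (n + i - s))
          = (-1) ^ i * pochhammer (of_nat (Suc n)) i * e i"
      proof (cases "l i = 0")
        case True then show ?thesis by (simp add: e_def)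
      next
        case False
        then have "i \<in> A" using i by (simp add: A_def)
        then have "degree (l i) + r - i \<le> E" by (rule E1)
        then have "n + i - s = E + i - r" "\<not> n + i < s" using n i by (auto simp: s_def N_def)
        then show ?thesis by (simp add: e_def)
      qed
    qed simp
    also have "\<dots> = poly Phi (of_nat n)"
      by (simp add: Phi_def poly_sum Qp_poly mult_ac)
    also have "\<dots> \<noteq> 0" using N0[of n] n by (auto simp: N_def)
    finally have c1: "coeff (Ls (monom 1 s)) n \<noteq> 0" .
    have c2: "coeff (Ls (monom 1 s)) m = 0" if m: "m > n" for m
      unfolding cf
    proof (rule sum.neutral, intro ballI)
      fix i assume i: "i \<in> {..r}"
      show "(-1) ^ i * pochhammer (of_nat (Suc m)) i * (if m + i < s then 0 else coeff (l i) (m + i - s)) = 0"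
      proof (cases "l i = 0 \<or> m + i < s")
        case False
        then have "i \<in> A" using i by (simp add: A_def)
        then have "degree (l i) + r - i \<le> E" by (rule E1)
        then have "m + i - s > degree (l i)" using n m i False by (auto simp: s_def N_def)
        then show ?thesis using False by (simp add: coeff_eq_0)
      qed auto
    qed
    show ?thesis using c1 c2 by blast
  qed
  then show ?thesis by (intro exI[of _ N]) (auto simp: N_def)
qed



locale annf =
  fixes f :: "complex fps" and r :: nat and l :: "nat \<Rightarrow> complex poly"
  assumes ann: "poly_ann f r l"
begin

definition Fd :: "nat \<Rightarrow> complex fps" where "Fd j = (fps_deriv ^^ j) f"
definition Ip :: "complex poly \<Rightarrow> complex fps" where "Ip p = fps_int (fps_of_poly p * f)"
definition B0 :: "complex fps set" where "B0 = Fd ` {..<r} \<union> {1}"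
definition BN :: "nat \<Rightarrow> complex fps set" where "BN N = B0 \<union> (\<lambda>k. Ip (monom 1 k)) ` {..<N}"
definition Lstar :: "complex poly \<Rightarrow> complex poly" where
  "Lstar q = (\<Sum>i\<le>r. smult ((-1) ^ i) ((pderiv ^^ i) (q * l i)))"

lemma const_span: "fps_const a \<in> pm.span S" if "1 \<in> S"
proof -
  have "fps_const a = pscale [:a:] 1" by (simp add: pscale_def fps_of_poly_const)
  then show ?thesis using that by (simp add: pm.span_base pm.span_scale)
qed

lemma constmult_span: "x \<in> pm.span S \<Longrightarrow> fps_const a * x \<in> pm.span S"
proof -
  assume "x \<in> pm.span S"
  moreover have "fps_const a * x = pscale [:a:] x" by (simp add: pscale_def fps_of_poly_const)
  ultimately show ?thesis by (simp add: pm.span_scale)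
qed

lemma aux_neg: "- (fps_const (- a) * X) = fps_const a * (X :: complex fps)"
  by (metis fps_const_neg minus_minus mult_minus_left)

lemma Ip_add: "Ip (p + q) = Ip p + Ip q"
  by (simp add: Ip_def fps_of_poly_add distrib_right fps_int_add)
lemma Ip_diff: "Ip (p - q) = Ip p - Ip q"
  by (simp add: Ip_def fps_of_poly_diff left_diff_distrib fps_int_diff)
lemma Ip_smult: "Ip (smult a p) = fps_const a * Ip p"
  by (simp add: Ip_def fps_of_poly_smult mult.assoc fps_int_const_mult)
lemma Ip_sum: "Ip (sum g A) = (\<Sum>x\<in>A. Ip (g x))"
  by (simp add: Ip_def fps_of_poly_sum sum_distrib_right fps_int_sum)

lemma L1:
  "i \<le> r \<Longrightarrow> fps_int (fps_of_poly u * Fd i) - fps_const ((-1) ^ i) * Ip ((pderiv ^^ i) u)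
     \<in> pm.span (Fd ` {..<i} \<union> {1})"
proof (induction i arbitrary: u)
  case 0
  then show ?case by (simp add: Fd_def Ip_def pm.span_zero)
next
  case (Suc i)
  define X where "X = fps_int (fps_of_poly (pderiv u) * Fd i) - fps_const ((-1) ^ i) * Ip ((pderiv ^^ i) (pderiv u))"
  have "X \<in> pm.span (Fd ` {..<i} \<union> {1})" using Suc by (simp add: X_def)
  also have "\<dots> \<subseteq> pm.span (Fd ` {..<Suc i} \<union> {1})" by (rule pm.span_mono) auto
  finally have X: "X \<in> pm.span (Fd ` {..<Suc i} \<union> {1})" .
  have "fps_int (fps_of_poly u * Fd (Suc i)) = fps_int (fps_deriv (Fd i) * fps_of_poly u)"
    by (simp add: Fd_def mult.commute)
  also have "\<dots> = Fd i * fps_of_poly u - fps_const (Fd i $ 0 * fps_of_poly u $ 0)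
      - fps_int (Fd i * fps_of_poly (pderiv u))"
    by (simp add: fps_int_parts fps_of_poly_pderiv)
  finally have "fps_int (fps_of_poly u * Fd (Suc i)) - fps_const ((-1) ^ Suc i) * Ip ((pderiv ^^ Suc i) u)
     = pscale u (Fd i) - fps_const (Fd i $ 0 * fps_of_poly u $ 0) - X"
    by (simp add: X_def pscale_def funpow_Suc_right mult.commute aux_neg del: funpow.simps)
  also have "\<dots> \<in> pm.span (Fd ` {..<Suc i} \<union> {1})"
    by (intro pm.span_diff X const_span pm.span_scale pm.span_base) auto
  finally show ?case .
qed

lemma span_B0_BN: "pm.span B0 \<subseteq> pm.span (BN N)"
  by (rule pm.span_mono) (auto simp: BN_def)

lemma L2: "Ip (Lstar q) \<in> pm.span B0"
proof -
  define Y where "Y i = fps_int (fps_of_poly (q * l i) * Fd i) - fps_const ((-1) ^ i) * Ip ((pderiv ^^ i) (q * l i))" for i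
  have Y: "Y i \<in> pm.span B0" if "i \<le> r" for i
  proof -
    have "Y i \<in> pm.span (Fd ` {..<i} \<union> {1})" using L1 that by (simp add: Y_def)
    also have "\<dots> \<subseteq> pm.span B0" by (rule pm.span_mono) (use that in \<open>auto simp: B0_def\<close>)
    finally show ?thesis .
  qed
  have "(\<Sum>i\<le>r. fps_int (fps_of_poly (q * l i) * Fd i)) = fps_int (fps_of_poly q * (\<Sum>i\<le>r. fps_of_poly (l i) * Fd i))"
    by (simp add: fps_int_sum sum_distrib_left fps_of_poly_mult mult.assoc)
  also have "\<dots> = 0" using ann by (simp add: poly_ann_def Fd_def)
  finally have z: "(\<Sum>i\<le>r. fps_int (fps_of_poly (q * l i) * Fd i)) = 0" .
  have "Ip (Lstar q) = (\<Sum>i\<le>r. fps_const ((-1) ^ i) * Ip ((pderiv ^^ i) (q * l i)))"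
    by (simp add: Lstar_def Ip_sum Ip_smult)
  also have "\<dots> = (\<Sum>i\<le>r. fps_int (fps_of_poly (q * l i) * Fd i)) - (\<Sum>i\<le>r. Y i)"
    by (simp add: Y_def sum_subtractf)
  also have "\<dots> = - (\<Sum>i\<le>r. Y i)" using z by simp
  also have "\<dots> \<in> pm.span B0" using Y by (intro pm.span_neg pm.span_sum) auto
  finally show ?thesis .
qed

lemma L3: "\<exists>N\<ge>1. \<forall>n\<ge>N. \<exists>q. coeff (Lstar q) n \<noteq> 0 \<and> (\<forall>m>n. coeff (Lstar q) m = 0)"
  using L3_gen[of l r] ann unfolding Lstar_def poly_ann_def by blast

lemma deg_lt: fixes p :: "complex poly"
  assumes "0 < n" "\<forall>m\<ge>n. coeff p m = 0" shows "degree p < n"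
proof (cases "p = 0")
  case False
  then have "coeff p (degree p) \<noteq> 0" by simp
  then show ?thesis using assms by (meson not_le)
qed (use assms in simp)

lemma lemmaA:
  obtains N where "\<And>p. Ip p \<in> pm.span (BN N)"
proof -
  obtain N where N1: "N \<ge> 1" and N: "\<And>n. n \<ge> N \<Longrightarrow> \<exists>q. coeff (Lstar q) n \<noteq> 0 \<and> (\<forall>m>n. coeff (Lstar q) m = 0)"
    using L3 by blast
  have "Ip p \<in> pm.span (BN N)" for p
  proof (induction "degree p" arbitrary: p rule: less_induct)
    case less
    show ?case
    proof (cases "degree p < N")
      case True
      have "Ip p = Ip (\<Sum>i\<le>degree p. smult (coeff p i) (monom 1 i))"
        by (simp add: smult_monom poly_as_sum_of_monoms)
      also have "\<dots> = (\<Sum>i\<le>degree p. fps_const (coeff p i) * Ip (monom 1 i))"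
        by (simp add: Ip_sum Ip_smult)
      also have "\<dots> \<in> pm.span (BN N)"
        using True by (intro pm.span_sum constmult_span pm.span_base) (auto simp: BN_def)
      finally show ?thesis .
    next
      case False
      define n where "n = degree p"
      obtain q where q: "coeff (Lstar q) n \<noteq> 0" "\<forall>m>n. coeff (Lstar q) m = 0"
        using N False n_def by (meson not_le)
      define p' where "p' = p - smult (coeff p n / coeff (Lstar q) n) (Lstar q)"
      have "\<forall>m\<ge>n. coeff p' m = 0"
      proof (intro allI impI)
        fix m assume "n \<le> m"
        then show "coeff p' m = 0"
        proof (cases "m = n")
          case False
          with \<open>n \<le> m\<close> have "m > n" by simp
          then show ?thesis using q by (simp add: p'_def n_def coeff_eq_0)
        qed (use q in \<open>simp add: p'_def\<close>)
      qed
      moreover have "0 < n" using False N1 n_def by simp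
      ultimately have "degree p' < degree p" using deg_lt n_def by blast
      then have "Ip p' \<in> pm.span (BN N)" using less by blast
      moreover have "Ip p = Ip p' + fps_const (coeff p n / coeff (Lstar q) n) * Ip (Lstar q)"
        by (simp add: p'_def Ip_diff Ip_smult)
      moreover have "Ip (Lstar q) \<in> pm.span (BN N)" using L2 span_B0_BN by blast
      ultimately show ?thesis by (simp add: pm.span_add constmult_span)
    qed
  qed
  then show ?thesis using that by blast
qed

end


lemma deriv_int_pow: "i \<le> m \<Longrightarrow> (fps_deriv ^^ i) ((fps_int ^^ m) h) = (fps_int ^^ (m - i)) h"
proof (induction i)
  case (Suc i)
  then have "m - i = Suc (m - Suc i)" by simp
  then show ?case using Suc by simp
qed simp

context annf begin

lemma int_base:
  assumes x: "x \<in> BN N" and A: "\<And>p. Ip p \<in> pm.span (BN N)"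
  shows "fps_int (pscale c x) \<in> pm.span (BN N)"
proof -
  have sub: "pm.span (Fd ` {..<j} \<union> {1}) \<subseteq> pm.span (BN N)" if "j \<le> r" for j
    by (rule pm.span_mono) (use that in \<open>auto simp: BN_def B0_def\<close>)
  consider (a) j where "j < r" "x = Fd j" | (b) "x = 1" | (c) k where "x = Ip (monom 1 k)"
    using x by (auto simp: BN_def B0_def)
  then show ?thesis
  proof cases
    case (a j)
    define Y where "Y = fps_int (fps_of_poly c * Fd j) - fps_const ((-1) ^ j) * Ip ((pderiv ^^ j) c)"
    have "Y \<in> pm.span (BN N)" using L1[of j c] sub[of j] a by (auto simp: Y_def)
    moreover have "fps_int (pscale c x) = Y + fps_const ((-1) ^ j) * Ip ((pderiv ^^ j) c)"
      using a by (simp add: Y_def pscale_def)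
    ultimately show ?thesis using A by (simp add: pm.span_add constmult_span)
  next
    case b
    obtain C where "fps_of_poly C = fps_int (fps_of_poly c)" using fps_int_poly by blast
    then have "fps_int (pscale c x) = pscale C 1" using b by (simp add: pscale_def)
    then show ?thesis by (simp add: pm.span_scale pm.span_base BN_def B0_def)
  next
    case (c k)
    obtain C where C: "fps_of_poly C = fps_int (fps_of_poly c)" using fps_int_poly by blast
    define G where "G = Ip (monom 1 k)"
    have "fps_int (pscale c x) = fps_int (fps_deriv (fps_of_poly C) * G)"
      using c C by (simp add: pscale_def G_def)
    also have "\<dots> = pscale C G - Ip (C * monom 1 k)"
      by (simp add: fps_int_parts G_def Ip_def pscale_def fps_of_poly_mult mult.assoc)
    finally show ?thesis using A c
      by (simp add: G_def pm.span_diff pm.span_scale pm.span_base)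
  qed
qed

lemma int_span:
  assumes A: "\<And>p. Ip p \<in> pm.span (BN N)" and v: "v \<in> pm.span (BN N)"
  shows "fps_int v \<in> pm.span (BN N)"
  using v
proof (induction rule: pm.span_induct_alt)
  case base
  then show ?case by (simp add: pm.span_zero)
next
  case (step c x y)
  then show ?case using int_base[OF step(1) A] by (simp add: fps_int_add pm.span_add)
qed

lemma f_span: "f \<in> pm.span (BN N)"
proof (cases "r = 0")
  case True
  then have "fps_of_poly (l 0) * f = 0" "l 0 \<noteq> 0" using ann by (auto simp: poly_ann_def)
  then have "f = 0" by (simp add: fps_of_poly_eq_iff[of _ 0, simplified])
  then show ?thesis by (simp add: pm.span_zero)
next
  case False
  then have "Fd 0 \<in> BN N" unfolding BN_def B0_def by blast
  then have "f \<in> BN N" by (simp add: Fd_def)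
  then show ?thesis by (rule pm.span_base)
qed

lemma bound: "\<exists>n. \<forall>m\<ge>n. dfinite_order ((fps_int ^^ m) f) \<le> n"
proof -
  obtain N where A: "\<And>p. Ip p \<in> pm.span (BN N)" using lemmaA by blast
  have gs: "(fps_int ^^ m) f \<in> pm.span (BN N)" for m
    by (induction m) (simp_all add: f_span int_span A)
  define n where "n = card (BN N)"
  have fin: "finite (BN N)" by (simp add: BN_def B0_def)
  have "dfinite_order ((fps_int ^^ m) f) \<le> n" if m: "m \<ge> n" for m
  proof -
    define v where "v i = (fps_deriv ^^ i) ((fps_int ^^ m) f)" for i
    have "\<forall>i\<in>{..n}. v i \<in> pm.span (BN N)"
      using m by (auto simp: v_def deriv_int_pow gs)
    then obtain c where c: "\<exists>i\<in>{..n}. c i \<noteq> 0" "(\<Sum>i\<le>n. pscale (c i) (v i)) = 0"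
      using dep[OF fin, of "{..n}" v] by (auto simp: n_def)
    define S where "S = {i\<in>{..n}. c i \<noteq> 0}"
    have Sne: "S \<noteq> {}" "finite S" using c by (auto simp: S_def)
    define j where "j = Max S"
    have jS: "j \<in> S" using Sne by (simp add: j_def)
    have jn: "j \<le> n" using jS by (simp add: S_def)
    have above: "c i = 0" if "j < i" "i \<le> n" for i
    proof (rule ccontr)
      assume "c i \<noteq> 0"
      then have "i \<in> S" using that by (simp add: S_def)
      then have "i \<le> j" using Max_ge[OF Sne(2)] j_def by blast
      with that show False by simp
    qed
    have "(\<Sum>i\<le>j. pscale (c i) (v i)) = (\<Sum>i\<le>n. pscale (c i) (v i))"
      by (rule sum.mono_neutral_left) (use jn above in \<open>auto simp: pscale_def\<close>)
    then have "poly_ann ((fps_int ^^ m) f) j c"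
      using c jS by (simp add: poly_ann_def S_def v_def pscale_def)
    then show ?thesis using order_le jn by fastforce
  qed
  then show ?thesis by blast
qed

end

theorem theorem4p5:
  fixes f :: "complex fps"
  assumes "dfinite f"
  shows "\<exists>m::nat. stable ((fps_int ^^ m) f)"
proof -
  obtain r l where "poly_ann f r l" using assms dfinite_iff by blast
  then interpret annf f r l by unfold_locales
  obtain n where n: "\<And>m. m \<ge> n \<Longrightarrow> dfinite_order ((fps_int ^^ m) f) \<le> n" using bound by blast
  define g where "g m = (fps_int ^^ m) f" for m
  define d where "d m = dfinite_order (g m)" for m
  have df: "dfinite (g m)" for m
    by (induction m) (simp_all add: g_def assms dfinite_int)
  have mono1: "d m \<le> d (Suc m)" for m
    using order_deriv_le[OF df[of "Suc m"]] by (simp add: d_def g_def)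
  have mono: "d m \<le> d (m + k)" for m k
    by (induction k) (auto intro: order_trans mono1)
  have bd: "d m \<le> n" for m
    using mono[of m n] n[of "m + n"] by (simp add: d_def g_def)
  have fr: "finite (range d)" using bd by (meson finite_atMost finite_subset image_subsetI atMost_iff)
  obtain M where M: "d M = Max (range d)"
    using Max_in[OF fr] by (metis empty_not_UNIV image_is_empty imageE)
  have const: "d (M + i) = d M" for i
    using mono[of M i] Max_ge[OF fr, of "d (M + i)"] M by simp
  have "stable (g M)"
    unfolding stable_def
  proof (intro conjI exI[of _ "\<lambda>i. g (M + i)"] allI)
    show "dfinite (g M)" by (rule df)
    show "g (M + 0) = g M" by simp
    fix i
    show "g (M + i) = fps_deriv (g (M + Suc i))" by (simp add: g_def)
    show "dfinite (g (M + i))" by (rule df)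
    show "dfinite_order (g (M + i)) = dfinite_order (g M)" using const by (simp add: d_def)
  qed
  then show ?thesis by (auto simp: g_def)
qed


end
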